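(* Let $\|\cdot\|$ be a strictly convex norm on $\mathbb R^2$ that is $C^1$ on $\mathbb R^2\setminus\{0\}$. Then $\mathrm c^{\mathrm{ENT}}(z^+,z^-)\le\Pi(z^+,z^-)$ for all distinct $z^+,z^-\in\partial\mathsf B$.
   Context: $\mathsf B=\{\|z\|<1\}$ normalized so that $\partial\mathsf B$ has length $2\pi$; $\gamma$ is its counterclockwise arc-length parametrization; $\mathbb R^2\cong\mathbb C$, $i$ = rotation by $\pi/2$. $\alpha$ is continuous with $\gamma'=e^{i\alpha}$, and $\Pi(\gamma(\theta_1),\gamma(\theta_2))=\int_{\theta_1}^{\theta_2}\int_{\theta_1}^{\theta_2}|\alpha(t)-\alpha(s)|\,dt\,ds$ for $|\theta_1-\theta_2|\le\pi$. For distinct $z^\pm$: $\nu=i\frac{z^+-z^-}{|z^+-z^-|}$ and $\mathrm c^{\mathrm{ENT}}(z^+,z^-)=\sup_{\lambda\in\Lambda_*}\int_{\theta^-}^{\theta^+}\lambda(t)\gamma'(t)\cdot\nu\,dt$ with $z^\pm=\gamma(\theta^\pm)$, $\Lambda_*=\{\lambda\in C^1(\mathbb R/2\pi\mathbb Z):\int_{\mathbb R/2\pi\mathbb Z}\lambda\gamma'=0,\ \|\lambda'\|_\infty\le1\}$. *)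

theory Defs
  imports "HOL-Complex_Analysis.Complex_Analysis"
begin

text \<open>R^2 is identified with the complex plane. A norm on R^2.\<close>
definition is_norm :: "(complex \<Rightarrow> real) \<Rightarrow> bool" where
  "is_norm N \<longleftrightarrow> (\<forall>x. N x \<ge> 0) \<and> (\<forall>x. N x = 0 \<longleftrightarrow> x = 0)
     \<and> (\<forall>c x. N (c *\<^sub>R x) = \<bar>c\<bar> * N x) \<and> (\<forall>x y. N (x + y) \<le> N x + N y)"

definition strictly_convex_norm :: "(complex \<Rightarrow> real) \<Rightarrow> bool" where
  "strictly_convex_norm N \<longleftrightarrow>
     (\<forall>x y. N x = 1 \<longrightarrow> N y = 1 \<longrightarrow> x \<noteq> y \<longrightarrow> N ((1/2) *\<^sub>R (x + y)) < 1)"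

definition C1_off_origin :: "(complex \<Rightarrow> real) \<Rightarrow> bool" where
  "C1_off_origin N \<longleftrightarrow> (\<exists>D :: complex \<Rightarrow> complex \<Rightarrow>\<^sub>L real.
     (\<forall>x. x \<noteq> 0 \<longrightarrow> (N has_derivative blinfun_apply (D x)) (at x))
     \<and> continuous_on (- {0}) D)"

definition oint :: "real \<Rightarrow> real \<Rightarrow> (real \<Rightarrow> real) \<Rightarrow> real" where
  "oint a b f = (if a \<le> b then integral {a..b} f else - integral {b..a} f)"

definition Lambda_star :: "(real \<Rightarrow> complex) \<Rightarrow> (real \<Rightarrow> real) set" where
  "Lambda_star \<gamma> = {l. (\<forall>t. l (t + 2*pi) = l t)
     \<and> (\<exists>dl. (\<forall>t. (l has_real_derivative dl t) (at t)) \<and> continuous_on UNIV dl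
             \<and> (\<forall>t. \<bar>dl t\<bar> \<le> 1))
     \<and> integral {0..2*pi} (\<lambda>t. l t *\<^sub>R vector_derivative \<gamma> (at t)) = 0}"

definition nu_vec :: "complex \<Rightarrow> complex \<Rightarrow> complex" where
  "nu_vec zp zm = \<i> * (zp - zm) / complex_of_real (cmod (zp - zm))"

definition cENT :: "(real \<Rightarrow> complex) \<Rightarrow> real \<Rightarrow> real \<Rightarrow> real" where
  "cENT \<gamma> thP thM = (SUP l\<in>Lambda_star \<gamma>.
      oint thM thP (\<lambda>t. l t * (vector_derivative \<gamma> (at t) \<bullet> nu_vec (\<gamma> thP) (\<gamma> thM))))"

text \<open>Pi(gamma(th1), gamma(th2)) for |th1 - th2| <= pi.\<close>
definition PiE :: "(real \<Rightarrow> real) \<Rightarrow> real \<Rightarrow> real \<Rightarrow> real" where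
  "PiE \<alpha> th1 th2 = oint th1 th2 (\<lambda>t. oint th1 th2 (\<lambda>s. \<bar>\<alpha> t - \<alpha> s\<bar>))"

end

theory Submission imports Defs begin

lemma core:
  fixes l g \<alpha> :: "real \<Rightarrow> real" and a b :: real
  assumes ab: "a \<le> b" and cl: "continuous_on UNIV l" and cg: "continuous_on UNIV g"
    and ca: "continuous_on UNIV \<alpha>"
    and ll: "\<And>t s. \<bar>l t - l s\<bar> \<le> \<bar>t - s\<bar>" and gl: "\<And>t s. \<bar>g t - g s\<bar> \<le> \<bar>\<alpha> t - \<alpha> s\<bar>"
    and g0: "integral {a..b} g = 0"
  shows "\<bar>integral {a..b} (\<lambda>t. l t * g t)\<bar> \<le> integral {a..b} (\<lambda>t. integral {a..b} (\<lambda>s. \<bar>\<alpha> t - \<alpha> s\<bar>))"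
proof -
  define L where "L = integral {a..b} l"
  define M where "M = integral {a..b} (\<lambda>t. l t * g t)"
  define F where "F = (\<lambda>t. integral {a..b} (\<lambda>s. \<bar>\<alpha> t - \<alpha> s\<bar>))"
  have hl: "(l has_integral L) {a..b}" unfolding L_def
    by (rule integrable_integral, rule integrable_continuous_interval, rule continuous_on_subset[OF cl]) auto
  have hg: "(g has_integral 0) {a..b}" using g0
    by (metis integrable_integral integrable_continuous_interval continuous_on_subset[OF cg] subset_UNIV)
  have hlg: "((\<lambda>t. l t * g t) has_integral M) {a..b}" unfolding M_def
    by (rule integrable_integral, rule integrable_continuous_interval,
        auto intro!: continuous_intros continuous_on_subset[OF cl] continuous_on_subset[OF cg])
  have inner: "((\<lambda>s. (l t - l s) * (g t - g s)) has_integral ((b-a)*(l t*g t) - g t * L + M)) {a..b}" for t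
  proof -
    have e: "(\<lambda>s. (l t - l s) * (g t - g s)) = (\<lambda>s. ((l t * g t) - l t * g s) - g t * l s + l s * g s)"
      by (auto simp: algebra_simps)
    have "((\<lambda>s. ((l t * g t) - l t * g s) - g t * l s + l s * g s) has_integral
        ((Henstock_Kurzweil_Integration.content {a..b} *\<^sub>R (l t * g t) - l t * 0) - g t * L + M)) {a..b}"
      by (intro has_integral_add has_integral_diff has_integral_const_real has_integral_mult_right hl hg hlg)
    then show ?thesis using ab e by simp
  qed
  have c1: "continuous_on UNIV (\<lambda>x::real\<times>real. \<alpha> (fst x))"
    using continuous_on_compose[OF continuous_on_fst[OF continuous_on_id] continuous_on_subset[OF ca]]
    by (simp add: o_def)
  have c2: "continuous_on UNIV (\<lambda>x::real\<times>real. \<alpha> (snd x))"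
    using continuous_on_compose[OF continuous_on_snd[OF continuous_on_id] continuous_on_subset[OF ca]]
    by (simp add: o_def)
  have c3: "continuous_on ({a..b}\<times>{a..b}) (\<lambda>(t,s). \<bar>\<alpha> t - \<alpha> s\<bar>)"
    unfolding split_beta
    by (intro continuous_intros continuous_on_subset[OF c1] continuous_on_subset[OF c2]) auto
  have cF: "continuous_on {a..b} F" unfolding F_def
    by (rule integral_continuous_on_param[where U="{a..b}" and a=a and b=b, unfolded cbox_interval])
       (rule c3)
  have hF: "(F has_integral integral {a..b} F) {a..b}"
    by (rule integrable_integral, rule integrable_continuous_interval, rule cF)
  have bnd: "\<bar>(b-a)*(l t*g t) - g t * L + M\<bar> \<le> (b-a) * F t" if t: "t \<in> {a..b}" for t
  proof -
    have "norm (integral {a..b} (\<lambda>s. (l t - l s) * (g t - g s))) \<le> integral {a..b} (\<lambda>s. (b-a) * \<bar>\<alpha> t - \<alpha> s\<bar>)"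
    proof (rule integral_norm_bound_integral)
      show "(\<lambda>s. (l t - l s) * (g t - g s)) integrable_on {a..b}" using inner by blast
      show "(\<lambda>s. (b-a) * \<bar>\<alpha> t - \<alpha> s\<bar>) integrable_on {a..b}"
        by (rule integrable_continuous_interval) (auto intro!: continuous_intros continuous_on_subset[OF ca])
      fix s assume s: "s \<in> {a..b}"
      have "\<bar>l t - l s\<bar> * \<bar>g t - g s\<bar> \<le> (b-a) * \<bar>\<alpha> t - \<alpha> s\<bar>"
        apply (rule mult_mono)
        using ll[of t s] t s gl[of t s] by auto
      then show "norm ((l t - l s) * (g t - g s)) \<le> (b-a) * \<bar>\<alpha> t - \<alpha> s\<bar>"
        by (simp add: abs_mult)
    qed
    moreover have "integral {a..b} (\<lambda>s. (b-a) * \<bar>\<alpha> t - \<alpha> s\<bar>) = (b-a) * F t"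
      unfolding F_def by simp
    ultimately show ?thesis using inner[of t] by (simp add: integral_unique F_def)
  qed
  have outer: "((\<lambda>t. (b-a)*(l t*g t) - g t * L + M) has_integral ((b-a) * M - 0 * L + Henstock_Kurzweil_Integration.content {a..b} *\<^sub>R M)) {a..b}"
    by (intro has_integral_add has_integral_diff has_integral_const_real has_integral_mult_right has_integral_mult_left hg hlg)
  have "norm (integral {a..b} (\<lambda>t. (b-a)*(l t*g t) - g t * L + M)) \<le> integral {a..b} (\<lambda>t. (b-a) * F t)"
    apply (rule integral_norm_bound_integral)
    using outer bnd has_integral_mult_right[OF hF, of "b-a"] by (auto simp: integrable_on_def)
  then have "\<bar>2 * (b-a) * M\<bar> \<le> (b-a) * integral {a..b} F"
  proof -
    have "integral {a..b} (\<lambda>t. (b-a) * F t) = (b-a) * integral {a..b} F" by simp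
    moreover have "integral {a..b} (\<lambda>t. (b-a)*(l t*g t) - g t * L + M) = 2 * (b-a) * M"
      using integral_unique[OF outer] ab by simp
    ultimately show ?thesis using \<open>norm _ \<le> _\<close> by simp
  qed
  moreover have "0 \<le> integral {a..b} F"
  proof (rule integral_nonneg)
    show "F integrable_on {a..b}" using hF by blast
    fix t assume "t \<in> {a..b}"
    show "0 \<le> F t" unfolding F_def
      by (rule integral_nonneg, rule integrable_continuous_interval)
         (auto intro!: continuous_intros continuous_on_subset[OF ca])
  qed
  ultimately have "\<bar>M\<bar> \<le> integral {a..b} F"
  proof (cases "a = b")
    case True then show ?thesis using \<open>0 \<le> integral {a..b} F\<close> by (simp add: M_def)
  next
    case False
    then have c: "b - a > 0" using ab by simp
    have "(b-a) * (2 * \<bar>M\<bar>) \<le> (b-a) * integral {a..b} F"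
      using \<open>\<bar>2 * (b-a) * M\<bar> \<le> _\<close> c
    proof -
      have "\<bar>2 * (b-a) * M\<bar> = (b-a) * (2 * \<bar>M\<bar>)" using c by (simp add: abs_mult)
      then show ?thesis using \<open>\<bar>2 * (b-a) * M\<bar> \<le> _\<close> by simp
    qed
    then have "2 * \<bar>M\<bar> \<le> integral {a..b} F" by (rule mult_left_le_imp_le[OF _ c])
    then show ?thesis by simp
  qed
  then show ?thesis by (simp add: M_def F_def)
qed

lemma cis_lip: "cmod (exp (\<i> * complex_of_real x) - exp (\<i> * complex_of_real y)) \<le> \<bar>x - y\<bar>"
proof -
  have d: "((\<lambda>u. exp (\<i> * complex_of_real u)) has_vector_derivative (\<i> * exp (\<i> * complex_of_real t))) (at t within S)" for t S
  proof -
    have "((\<lambda>z. exp (\<i> * z)) has_field_derivative (\<i> * exp (\<i> * complex_of_real t))) (at (complex_of_real t))"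
      by (auto intro!: derivative_eq_intros)
    from has_vector_derivative_real_field[OF this] show ?thesis .
  qed
  have "norm ((\<lambda>u. exp (\<i> * complex_of_real u)) x - (\<lambda>u. exp (\<i> * complex_of_real u)) y) \<le> 1 * norm (x - y)"
    apply (rule differentiable_bound[OF convex_UNIV, where f'="\<lambda>t h. h *\<^sub>R (\<i> * exp (\<i> * complex_of_real t))"])
    using d[unfolded has_vector_derivative_def] apply blast
    by (auto intro!: order_trans[OF onorm_scaleR_left_lemma] simp: onorm_scaleR_left norm_mult onorm_id)
  then show ?thesis by simp
qed

lemma lip_from_deriv:
  fixes l dl :: "real \<Rightarrow> real"
  assumes "\<forall>t. (l has_real_derivative dl t) (at t)" "\<forall>t. \<bar>dl t\<bar> \<le> 1"
  shows "\<bar>l t - l s\<bar> \<le> \<bar>t - s\<bar>"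
proof -
  have *: "\<bar>l y - l x\<bar> \<le> y - x" if "x < y" for x y
  proof -
    have "\<exists>z>x. z < y \<and> l y - l x = (y - x) * dl z"
      by (rule MVT2[OF that]) (use assms(1) in auto)
    then obtain z where "l y - l x = (y - x) * dl z" by blast
    then show ?thesis using assms(2)[rule_format, of z] that
      by (simp add: abs_mult)
  qed
  show ?thesis
    using *[of t s] *[of s t] by (cases "t < s"; cases "s < t") (auto simp: abs_minus_commute)
qed

lemma nu_orth: "w \<bullet> (\<i> * w / complex_of_real (cmod w)) = 0"
  by (simp add: inner_complex_def)

lemma nu_norm: "w \<noteq> 0 \<Longrightarrow> cmod (\<i> * w / complex_of_real (cmod w)) = 1"
  by (simp add: norm_divide norm_mult)

lemma PiE_eq: "PiE \<alpha> p m = integral {min p m..max p m} (\<lambda>t. integral {min p m..max p m} (\<lambda>s. \<bar>\<alpha> t - \<alpha> s\<bar>))"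
  unfolding PiE_def oint_def by (auto simp: min_def max_def integral_neg)

lemma oint_le: "oint m p h \<le> \<bar>integral {min p m..max p m} h\<bar>"
  unfolding oint_def by (auto simp: min_def max_def)

theorem lemma6p5:
  fixes N :: "complex \<Rightarrow> real" and \<gamma> :: "real \<Rightarrow> complex" and \<alpha> :: "real \<Rightarrow> real"
    and thP thM :: real
  assumes "is_norm N" and "strictly_convex_norm N" and "C1_off_origin N"
    and "\<forall>t. \<gamma> (t + 2*pi) = \<gamma> t"
    and "bij_betw \<gamma> {0..<2*pi} {z. N z = 1}"
    and "\<forall>t. (\<gamma> has_vector_derivative exp (\<i> * complex_of_real (\<alpha> t))) (at t)"
    and "continuous_on UNIV \<alpha>"
    and "winding_number (\<lambda>u. \<gamma> (2 * pi * u)) 0 = 1"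
    and "\<bar>thP - thM\<bar> \<le> pi" and "\<gamma> thP \<noteq> \<gamma> thM"
  shows "cENT \<gamma> thP thM \<le> PiE \<alpha> thP thM"
proof -
  note der = assms(6) and ca = assms(7)
  define \<nu> where "\<nu> = nu_vec (\<gamma> thP) (\<gamma> thM)"
  define g where "g = (\<lambda>t. exp (\<i> * complex_of_real (\<alpha> t)) \<bullet> \<nu>)"
  define a where "a = min thP thM"
  define b where "b = max thP thM"
  have ab: "a \<le> b" unfolding a_def b_def by simp
  have vd: "vector_derivative \<gamma> (at t) = exp (\<i> * complex_of_real (\<alpha> t))" for t
    using der vector_derivative_at by blast
  have nn: "cmod \<nu> = 1" unfolding \<nu>_def nu_vec_def using assms(10) by (intro nu_norm) simp
  have cg: "continuous_on UNIV g" unfolding g_def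
    by (auto intro!: continuous_intros ca)
  have gl: "\<bar>g t - g s\<bar> \<le> \<bar>\<alpha> t - \<alpha> s\<bar>" for t s
  proof -
    have "\<bar>g t - g s\<bar> = \<bar>(exp (\<i> * complex_of_real (\<alpha> t)) - exp (\<i> * complex_of_real (\<alpha> s))) \<bullet> \<nu>\<bar>"
      unfolding g_def by (simp add: inner_diff_left)
    also have "\<dots> \<le> cmod (exp (\<i> * complex_of_real (\<alpha> t)) - exp (\<i> * complex_of_real (\<alpha> s))) * cmod \<nu>"
      by (rule Cauchy_Schwarz_ineq2)
    also have "\<dots> \<le> \<bar>\<alpha> t - \<alpha> s\<bar>" using nn cis_lip by simp
    finally show ?thesis .
  qed
  have g0: "integral {a..b} g = 0"
  proof -
    have "((\<lambda>t. exp (\<i> * complex_of_real (\<alpha> t))) has_integral (\<gamma> b - \<gamma> a)) {a..b}"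
      using ab der by (intro fundamental_theorem_of_calculus) (auto intro: has_vector_derivative_at_within)
    from has_integral_linear[OF this bounded_linear_inner_left[of \<nu>]]
    have "(g has_integral (\<gamma> b - \<gamma> a) \<bullet> \<nu>) {a..b}" by (simp add: g_def o_def)
    moreover have "(\<gamma> b - \<gamma> a) \<bullet> \<nu> = 0"
    proof -
      have o: "(\<gamma> thP - \<gamma> thM) \<bullet> \<nu> = 0" unfolding \<nu>_def nu_vec_def by (rule nu_orth)
      have "\<gamma> thM - \<gamma> thP = - (\<gamma> thP - \<gamma> thM)" by simp
      then have o2: "(\<gamma> thM - \<gamma> thP) \<bullet> \<nu> = 0" using o by (simp only: inner_minus_left)
      show ?thesis unfolding a_def b_def using o o2
        by (cases "thM \<le> thP") (auto simp: min_def max_def)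
    qed
    ultimately show ?thesis by (simp add: integral_unique)
  qed
  have ne: "Lambda_star \<gamma> \<noteq> {}"
  proof -
    have "(\<lambda>_. 0) \<in> Lambda_star \<gamma>" unfolding Lambda_star_def
      by (auto intro!: exI[of _ "\<lambda>_. 0"])
    then show ?thesis by blast
  qed
  show ?thesis unfolding cENT_def
  proof (rule cSUP_least[OF ne])
    fix l assume "l \<in> Lambda_star \<gamma>"
    then obtain dl where dl: "\<forall>t. (l has_real_derivative dl t) (at t)" "\<forall>t. \<bar>dl t\<bar> \<le> 1"
      unfolding Lambda_star_def by blast
    have cl: "continuous_on UNIV l"
      using dl(1) by (intro continuous_at_imp_continuous_on) (auto intro: DERIV_isCont)
    have "oint thM thP (\<lambda>t. l t * (vector_derivative \<gamma> (at t) \<bullet> \<nu>)) = oint thM thP (\<lambda>t. l t * g t)"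
      by (simp add: vd g_def)
    also have "\<dots> \<le> \<bar>integral {a..b} (\<lambda>t. l t * g t)\<bar>"
      unfolding a_def b_def by (rule oint_le)
    also have "\<dots> \<le> integral {a..b} (\<lambda>t. integral {a..b} (\<lambda>s. \<bar>\<alpha> t - \<alpha> s\<bar>))"
      by (rule core[OF ab cl cg ca lip_from_deriv[OF dl] gl g0])
    also have "\<dots> = PiE \<alpha> thP thM" unfolding a_def b_def by (simp add: PiE_eq)
    finally show "oint thM thP (\<lambda>t. l t * (vector_derivative \<gamma> (at t) \<bullet> nu_vec (\<gamma> thP) (\<gamma> thM))) \<le> PiE \<alpha> thP thM"
      by (simp add: \<nu>_def)
  qed
qed

end
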